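(* Let $\mathcal D$ be an ordered, oriented Descartes configuration with integer curvatures $(b_1,b_2,b_3,b_4)$ and let $g=\gcd(b_1,b_2,b_3,b_4)$. Then the Apollonian super-packing $\mathcal A^S[\mathcal D]$ contains a Descartes configuration whose curvature vector is a permutation of $(0,0,g,g)$ if $b_1+b_2+b_3+b_4>0$, and a permutation of $(0,0,-g,-g)$ if $b_1+b_2+b_3+b_4<0$.
   Context: Circles are taken in $\hat{\mathbb C}=\mathbb R^2\cup\{\infty\}$; lines count as circles. A Descartes configuration is a set of four mutually tangent circles with disjoint interiors; an ordered, oriented one carries an ordering and a total orientation, and the signed curvature of a circle is its reciprocal radius, negative for a circle whose interior is unbounded, $0$ for a line, with all signs reversed for negative total orientation. The curvature vector is $(b_1,\dots,b_4)^T$; it satisfies the Descartes relation $\sum b_i^2=\tfrac12(\sum b_i)^2$. Let $S_i$ be the $4\times4$ integer matrix equal to the identity except that row $i$ has $-1$ in position $i$ and $2$ in the other positions, $S_i^\perp=S_i^T$, and $\mathcal A^S=\langle S_1,\dots,S_4,S_1^\perp,\dots,S_4^\perp\rangle$ the super-Apollonian group. It acts on ordered oriented Descartes configurations by left multiplication on their augmented curvature-center coordinate matrices; in particular the curvature vector of $U[\mathcal D]$ is $U$ times the curvature vector of $\mathcal D$. The super-packing generated by $\mathcal D$ is the orbit $\mathcal A^S[\mathcal D]$. *)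

theory Defs
  imports "HOL-Analysis.Analysis"
begin

text \<open>Ordered, oriented Descartes configurations are represented by their augmented
curvature-center coordinate (ACC) matrices W (row i = circle i, columns
(curvature of the inverted circle, curvature, curvature*x, curvature*y)).
By the augmented Euclidean Descartes theorem (Lagarias-Mallows-Wilks, Thm 3.3),
a real 4x4 matrix is the ACC matrix of a (unique) ordered oriented Descartes
configuration iff  W^T Q_D W = Q_W.  Indices of type 4 are written 1,2,3,4.\<close>

definition QD :: "real^4^4" where
  "QD = (\<chi> i j. (if i = j then 1 else 0) - 1/2)"

definition QW :: "real^4^4" where
  "QW = (\<chi> i j. if (i = 1 \<and> j = 2) \<or> (i = 2 \<and> j = 1) then -4
                 else if i = j \<and> (i = 3 \<or> i = 4) then 2 else 0)"

definition descartes_config :: "real^4^4 \<Rightarrow> bool" where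
  "descartes_config W \<longleftrightarrow> transpose W ** QD ** W = QW"

definition curv :: "real^4^4 \<Rightarrow> real^4" where
  "curv W = (\<chi> i. W $ i $ 2)"

definition S_gen :: "4 \<Rightarrow> real^4^4" where
  "S_gen k = (\<chi> r c. if r = k then (if c = k then -1 else 2) else (if r = c then 1 else 0))"

definition super_gens :: "(real^4^4) set" where
  "super_gens = {S_gen k | k. True} \<union> {transpose (S_gen k) | k. True}"

text \<open>The group generated by the generators. All generators are involutions,
so the multiplicative closure (containing the identity) is the generated group.\<close>
inductive_set super_apollonian :: "(real^4^4) set" where
  id_in: "mat 1 \<in> super_apollonian"
| mult_in: "U \<in> super_apollonian \<Longrightarrow> G \<in> super_gens \<Longrightarrow> G ** U \<in> super_apollonian"

definition is_perm_of :: "real^4 \<Rightarrow> real^4 \<Rightarrow> bool" where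
  "is_perm_of x y \<longleftrightarrow> (\<exists>p. p permutes (UNIV :: 4 set) \<and> (\<forall>i. x $ i = y $ p i))"

definition vec00cc :: "real \<Rightarrow> real^4" where
  "vec00cc c = (\<chi> i. if i = 1 \<or> i = 2 then 0 else c)"

end

theory Submission
  imports Defs
begin


lemma num4_distinct: "(1::4) \<noteq> 2" "(1::4) \<noteq> 3" "(1::4) \<noteq> 4" "(2::4) \<noteq> 3" "(2::4) \<noteq> 4" "(3::4) \<noteq> 4"
  by simp_all

lemma S_pres: "transpose (S_gen k) ** QD ** S_gen k = QD"
  using exhaust_4[of k] apply (elim disjE)
  apply (simp_all add: vec_eq_iff forall_4 matrix_matrix_mult_def transpose_def S_gen_def QD_def sum_4)
  done

lemma ST_pres: "S_gen k ** QD ** transpose (S_gen k) = QD"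
  using exhaust_4[of k] apply (elim disjE)
  apply (simp_all add: vec_eq_iff forall_4 matrix_matrix_mult_def transpose_def S_gen_def QD_def sum_4)
  done

lemma QW22: "QW $ 2 $ 2 = 0" by (simp add: QW_def)

lemma desc_Q: assumes "descartes_config W"
  shows "2 * ((curv W $ 1)^2 + (curv W $ 2)^2 + (curv W $ 3)^2 + (curv W $ 4)^2) = (curv W $ 1 + curv W $ 2 + curv W $ 3 + curv W $ 4)^2"
proof -
  have "(transpose W ** QD ** W) $ 2 $ 2 = 0" using assms QW22 unfolding descartes_config_def by simp
  then show ?thesis
    by (simp add: matrix_matrix_mult_def transpose_def QD_def sum_4 curv_def power2_eq_square algebra_simps)
qed



lemma bound0: fixes a x y z s :: int
  assumes "2 * (a^2 + x^2 + y^2 + z^2) = s^2" "s = a + x + y + z" "s > 0"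
  shows "3 * s - 4 * a > 0 \<and> s + 4 * a > 0"
proof -
  have "3 * (x^2+y^2+z^2) \<ge> (x+y+z)^2"
  proof -
    have "0 \<le> (x-y)^2 + (y-z)^2 + (x-z)^2" by simp
    then show ?thesis by (simp add: power2_eq_square algebra_simps)
  qed
  then have h: "(4*a) * (4*a) - 2 * s * (4*a) - 2 * s * s \<le> 0" using assms(1,2)
    by (simp add: power2_eq_square algebra_simps)
  show ?thesis
  proof (rule conjI; rule ccontr)
    assume "\<not> 3 * s - 4 * a > 0"
    then have "4*a \<ge> 3* s" by simp
    then have "(4*a) * (4*a - 2* s) \<ge> (3* s) * s" apply (rule mult_mono[of "3* s" "4*a" s "4*a-2* s"]) using \<open>4*a \<ge> 3* s\<close> assms(3) by linarith+
    then show False using h assms(3) mult_pos_pos[OF assms(3) assms(3)] by (simp add: algebra_simps)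
  next
    assume "\<not> s + 4 * a > 0"
    then have "-(4*a) \<ge> s" by simp
    then have "(-(4*a)) * (-(4*a)) \<ge> s * s" apply (rule mult_mono[of s "-(4*a)" s "-(4*a)"]) using \<open>-(4*a) \<ge> s\<close> assms(3) by linarith+
    moreover have "(-(4*a)) * s \<ge> s * s" apply (rule mult_right_mono) using \<open>-(4*a) \<ge> s\<close> assms(3) by linarith+
    ultimately show False using h assms(3) mult_pos_pos[OF assms(3) assms(3)] by (simp add: algebra_simps)
  qed
qed



lemma SA_gen: "G \<in> super_gens \<Longrightarrow> G \<in> super_apollonian"
  using super_apollonian.mult_in[OF super_apollonian.id_in] by simp

lemma SA_mult: "U \<in> super_apollonian \<Longrightarrow> V \<in> super_apollonian \<Longrightarrow> U ** V \<in> super_apollonian"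
  by (induction rule: super_apollonian.induct) (auto simp: matrix_mul_assoc[symmetric] intro: super_apollonian.mult_in)

lemma SA_desc: "U \<in> super_apollonian \<Longrightarrow> descartes_config W \<Longrightarrow> descartes_config (U ** W)"
proof (induction rule: super_apollonian.induct)
  case id_in then show ?case by simp
next
  case (mult_in U G)
  have D: "descartes_config (U ** W)" using mult_in by simp
  have "transpose G ** QD ** G = QD" using mult_in(2) S_pres ST_pres unfolding super_gens_def
    by (auto simp: transpose_transpose)
  moreover have "transpose ((G ** U) ** W) ** QD ** ((G ** U) ** W) = transpose (U ** W) ** (transpose G ** QD ** G) ** (U ** W)"
    by (simp only: matrix_transpose_mul matrix_mul_assoc)
  ultimately show ?case using D unfolding descartes_config_def by simp
qed

lemma curv_mult: "curv (U ** W) = U *v curv W"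
  by (simp add: curv_def vec_eq_iff matrix_matrix_mult_def matrix_vector_mult_def)

definition rv :: "int^4 \<Rightarrow> real^4" where "rv b = (\<chi> i. real_of_int (b $ i))"
definition vs :: "int^4 \<Rightarrow> int" where "vs b = b$1 + b$2 + b$3 + b$4"
definition Qz :: "int^4 \<Rightarrow> bool" where "Qz b \<longleftrightarrow> 2 * ((b$1)^2 + (b$2)^2 + (b$3)^2 + (b$4)^2) = (vs b)^2"
definition gv :: "int^4 \<Rightarrow> int" where "gv b = gcd (gcd (b $ 1) (b $ 2)) (gcd (b $ 3) (b $ 4))"
definition Sv :: "4 \<Rightarrow> int^4 \<Rightarrow> int^4" where
  "Sv k b = (\<chi> i. if i = k then 2 * (vs b - b$k) - b$k else b$i)"
definition Tv :: "4 \<Rightarrow> int^4 \<Rightarrow> int^4" where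
  "Tv k b = (\<chi> i. if i = k then - b$k else b$i + 2 * b$k)"

lemma S_act: "S_gen k *v rv b = rv (Sv k b)"
  using exhaust_4[of k] apply (elim disjE)
  apply (simp_all add: vec_eq_iff forall_4 matrix_vector_mult_def S_gen_def rv_def Sv_def vs_def sum_4)
  done

lemma T_act: "transpose (S_gen k) *v rv b = rv (Tv k b)"
  using exhaust_4[of k] apply (elim disjE)
  apply (simp_all add: vec_eq_iff forall_4 matrix_vector_mult_def transpose_def S_gen_def rv_def Tv_def sum_4)
  done

lemma vs_S: "vs (Sv k b) = 3 * vs b - 4 * b$k"
  using exhaust_4[of k] by (elim disjE) (simp_all add: Sv_def vs_def)

lemma vs_T: "vs (Tv k b) = vs b + 4 * b$k"
  using exhaust_4[of k] by (elim disjE) (simp_all add: Tv_def vs_def)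

lemma Q_S: "Qz b \<Longrightarrow> Qz (Sv k b)"
  using exhaust_4[of k] by (elim disjE) (simp_all add: Qz_def Sv_def vs_def power2_eq_square algebra_simps)

lemma Q_T: "Qz b \<Longrightarrow> Qz (Tv k b)"
  using exhaust_4[of k] by (elim disjE) (simp_all add: Qz_def Tv_def vs_def power2_eq_square algebra_simps)

lemma dvd_gv: "d dvd gv b \<longleftrightarrow> (\<forall>i. d dvd b$i)"
  by (simp add: gv_def forall_4)

lemma gv_nonneg: "gv b \<ge> 0" by (simp add: gv_def)

lemma SS: "Sv k (Sv k b) = b"
  using exhaust_4[of k] by (elim disjE) (simp_all add: Sv_def vs_def vec_eq_iff forall_4)

lemma TT: "Tv k (Tv k b) = b"
  using exhaust_4[of k] by (elim disjE) (simp_all add: Tv_def vec_eq_iff forall_4)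

lemma dvd_S: "\<forall>i. d dvd b$i \<Longrightarrow> \<forall>i. d dvd (Sv k b)$i"
  by (simp add: Sv_def vs_def)

lemma dvd_T: "\<forall>i. d dvd b$i \<Longrightarrow> \<forall>i. d dvd (Tv k b)$i"
  by (simp add: Tv_def)

lemma gv_eqI: assumes "\<And>d. (\<forall>i. d dvd b$i) \<longleftrightarrow> (\<forall>i. d dvd c$i)" shows "gv b = gv c"
proof -
  have "gv b dvd gv c" using assms[of "gv b"] dvd_gv[of "gv b" b] dvd_gv[of "gv b" c] by simp
  moreover have "gv c dvd gv b" using assms[of "gv c"] dvd_gv[of "gv c" b] dvd_gv[of "gv c" c] by simp
  ultimately
  show ?thesis using gv_nonneg by (simp add: zdvd_antisym_nonneg)
qed

lemma gv_S: "gv (Sv k b) = gv b"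
proof (rule gv_eqI)
  fix d show "(\<forall>i. d dvd Sv k b $ i) = (\<forall>i. d dvd b $ i)"
    using dvd_S[of d "Sv k b" k] dvd_S[of d b k] unfolding SS by blast
qed

lemma gv_T: "gv (Tv k b) = gv b"
proof (rule gv_eqI)
  fix d show "(\<forall>i. d dvd Tv k b $ i) = (\<forall>i. d dvd b $ i)"
    using dvd_T[of d "Tv k b" k] dvd_T[of d b k] unfolding TT by blast
qed



lemma bound: assumes "Qz b" "vs b > 0" shows "3 * vs b - 4 * b$k > 0 \<and> vs b + 4 * b$k > 0"
proof -
  have q: "2 * ((b$1)^2 + (b$2)^2 + (b$3)^2 + (b$4)^2) = (vs b)^2" "vs b = b$1 + b$2 + b$3 + b$4"
    using assms(1) unfolding Qz_def vs_def by auto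
  have "k = 1 \<or> k = 2 \<or> k = 3 \<or> k = 4" by (rule exhaust_4)
  then show ?thesis
  proof (elim disjE)
    assume "k = 1" then show ?thesis using bound0[of "b$1" "b$2" "b$3" "b$4" "vs b"] q assms(2) by (simp add: algebra_simps)
  next
    assume "k = 2" then show ?thesis using bound0[of "b$2" "b$1" "b$3" "b$4" "vs b"] q assms(2) by (simp add: algebra_simps)
  next
    assume "k = 3" then show ?thesis using bound0[of "b$3" "b$1" "b$2" "b$4" "vs b"] q assms(2) by (simp add: algebra_simps)
  next
    assume "k = 4" then show ?thesis using bound0[of "b$4" "b$1" "b$2" "b$3" "vs b"] q assms(2) by (simp add: algebra_simps)
  qed
qed

lemma fin_perm: fixes b :: "int^4"
  assumes "\<forall>i. b$i = 0 \<or> b$i = c" "vs b = 2*c" "c > 0"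
  shows "gv b = c \<and> (\<exists>p. p permutes UNIV \<and> (\<forall>i. b$i = (if p i = 1 \<or> p i = 2 then 0 else c)))"
proof -
  have e: "b$1 = 0 \<or> b$1 = c" "b$2 = 0 \<or> b$2 = c" "b$3 = 0 \<or> b$3 = c" "b$4 = 0 \<or> b$4 = c"
    using assms(1) by auto
  have "(b$1=0 \<and> b$2=0 \<and> b$3=c \<and> b$4=c) \<or> (b$1=0 \<and> b$2=c \<and> b$3=0 \<and> b$4=c)
      \<or> (b$1=0 \<and> b$2=c \<and> b$3=c \<and> b$4=0) \<or> (b$1=c \<and> b$2=0 \<and> b$3=0 \<and> b$4=c)
      \<or> (b$1=c \<and> b$2=0 \<and> b$3=c \<and> b$4=0) \<or> (b$1=c \<and> b$2=c \<and> b$3=0 \<and> b$4=0)"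
    using e(1) e(2) e(3) e(4) apply (elim disjE)
    using assms(2,3) unfolding vs_def by simp_all
  then show ?thesis
  proof (elim disjE)
    assume h: "b$1=0 \<and> b$2=0 \<and> b$3=c \<and> b$4=c"
    show ?thesis apply (rule conjI) using h assms(3) apply (simp add: gv_def)
      apply (rule exI[of _ id]) using h by (simp add: forall_4)
  next
    assume h: "b$1=0 \<and> b$2=c \<and> b$3=0 \<and> b$4=c"
    show ?thesis apply (rule conjI) using h assms(3) apply (simp add: gv_def)
      apply (rule exI[of _ "Transposition.transpose 2 3"]) using h by (simp add: forall_4 permutes_swap_id)
  next
    assume h: "b$1=0 \<and> b$2=c \<and> b$3=c \<and> b$4=0"
    show ?thesis apply (rule conjI) using h assms(3) apply (simp add: gv_def)
      apply (rule exI[of _ "Transposition.transpose 2 4"]) using h by (simp add: forall_4 permutes_swap_id)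
  next
    assume h: "b$1=c \<and> b$2=0 \<and> b$3=0 \<and> b$4=c"
    show ?thesis apply (rule conjI) using h assms(3) apply (simp add: gv_def)
      apply (rule exI[of _ "Transposition.transpose 1 3"]) using h by (simp add: forall_4 permutes_swap_id)
  next
    assume h: "b$1=c \<and> b$2=0 \<and> b$3=c \<and> b$4=0"
    show ?thesis apply (rule conjI) using h assms(3) apply (simp add: gv_def)
      apply (rule exI[of _ "Transposition.transpose 1 4"]) using h by (simp add: forall_4 permutes_swap_id)
  next
    assume h: "b$1=c \<and> b$2=c \<and> b$3=0 \<and> b$4=0"
    show ?thesis apply (rule conjI) using h assms(3) apply (simp add: gv_def)
      apply (rule exI[of _ "Transposition.transpose 1 3 \<circ> Transposition.transpose 2 4"]) using h
      by (simp add: forall_4 permutes_swap_id permutes_compose)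
  qed
qed




lemma T_gen: "transpose (S_gen k) \<in> super_apollonian"
  by (rule SA_gen) (auto simp: super_gens_def)

lemma S_gen_in: "S_gen k \<in> super_apollonian"
  by (rule SA_gen) (auto simp: super_gens_def)

lemma descent: "nat (vs b) = n \<Longrightarrow> vs b > 0 \<Longrightarrow> Qz b \<Longrightarrow>
  \<exists>U\<in>super_apollonian. \<exists>p. p permutes UNIV \<and> (\<forall>i. (U *v rv b)$i = vec00cc (real_of_int (gv b)) $ p i)"
proof (induction n arbitrary: b rule: less_induct)
  case (less n)
  show ?case
  proof (cases "\<exists>k. b$k < 0")
    case True
    then obtain k where k: "b$k < 0" by blast
    have pos: "vs (Tv k b) > 0" using bound[OF less.prems(3) less.prems(2), of k] vs_T[of k b] by simp
    have lt: "nat (vs (Tv k b)) < n" using vs_T[of k b] k less.prems(1,2) by simp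
    have q: "Qz (Tv k b)" using Q_T less.prems(3) by blast
    obtain U p where U: "U \<in> super_apollonian" "p permutes UNIV"
      "\<forall>i. (U *v rv (Tv k b))$i = vec00cc (real_of_int (gv (Tv k b))) $ p i"
      using less.IH[OF lt refl pos q] by blast
    have "U ** transpose (S_gen k) \<in> super_apollonian" using SA_mult[OF U(1) T_gen] .
    moreover have "(U ** transpose (S_gen k)) *v rv b = U *v rv (Tv k b)"
      by (simp only: matrix_vector_mul_assoc[symmetric] T_act)
    ultimately show ?thesis using U gv_T by metis
  next
    case F1: False
    show ?thesis
    proof (cases "\<exists>k. 2 * b$k > vs b")
      case True
      then obtain k where k: "2 * b$k > vs b" by blast
      have pos: "vs (Sv k b) > 0" using bound[OF less.prems(3) less.prems(2), of k] vs_S[of k b] by simp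
      have lt: "nat (vs (Sv k b)) < n" using vs_S[of k b] k less.prems(1,2) by simp
      have q: "Qz (Sv k b)" using Q_S less.prems(3) by blast
      obtain U p where U: "U \<in> super_apollonian" "p permutes UNIV"
        "\<forall>i. (U *v rv (Sv k b))$i = vec00cc (real_of_int (gv (Sv k b))) $ p i"
        using less.IH[OF lt refl pos q] by blast
      have "U ** S_gen k \<in> super_apollonian" using SA_mult[OF U(1) S_gen_in] .
      moreover have "(U ** S_gen k) *v rv b = U *v rv (Sv k b)"
        by (simp only: matrix_vector_mul_assoc[symmetric] S_act)
      ultimately show ?thesis using U gv_S by metis
    next
      case F2: False
      define s where "s = vs b"
      have nn: "\<forall>i. 0 \<le> b$i \<and> 2 * b$i \<le> s" using F1 F2 unfolding s_def by (auto simp: not_less)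
      have s4: "s = b$1 + b$2 + b$3 + b$4" unfolding s_def vs_def by simp
      have sq: "2 * ((b$1)^2 + (b$2)^2 + (b$3)^2 + (b$4)^2) = s^2"
        using less.prems(3) unfolding Qz_def s_def by simp
      have t: "b$1 * (s - 2*b$1) + b$2 * (s - 2*b$2) + b$3 * (s - 2*b$3) + b$4 * (s - 2*b$4) = 0"
        using sq s4 by (simp add: power2_eq_square algebra_simps)
      have nz: "\<forall>i. b$i * (s - 2*b$i) \<ge> 0" using nn by simp
      have z: "b$i * (s - 2*b$i) = 0" for i
      proof -
        have "b$1 * (s - 2*b$1) = 0 \<and> b$2 * (s - 2*b$2) = 0 \<and> b$3 * (s - 2*b$3) = 0 \<and> b$4 * (s - 2*b$4) = 0"
          using t nz[rule_format, of 1] nz[rule_format, of 2] nz[rule_format, of 3] nz[rule_format, of 4]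
          by linarith
        then show ?thesis using exhaust_4[of i] by auto
      qed
      have "even (s^2)" using sq by (metis dvd_triv_left)
      then have "even s" by simp
      then obtain c where c: "s = 2 * c" by blast
      have cpos: "c > 0" using less.prems(2) c unfolding s_def by simp
      have vals: "\<forall>i. b$i = 0 \<or> b$i = c" using z c by auto
      obtain p where p: "p permutes UNIV" "\<forall>i. b$i = (if p i = 1 \<or> p i = 2 then 0 else c)" and g: "gv b = c"
        using fin_perm[OF vals _ cpos] c unfolding s_def by blast
      have "\<forall>i. (mat 1 *v rv b)$i = vec00cc (real_of_int (gv b)) $ p i"
        using p(2) g by (auto simp: rv_def vec00cc_def)
      then show ?thesis using p(1) super_apollonian.id_in by blast
    qed
  qed
qed




lemma mv_neg: "U *v (- x) = - (U *v (x::real^4))"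
  by (simp add: vec_eq_iff matrix_vector_mult_def sum_negf)

theorem theorem4p2:
  fixes W :: "real^4^4" and b :: "int^4"
  assumes "descartes_config W"
    and "\<forall>i. curv W $ i = of_int (b $ i)"
  defines "g \<equiv> gcd (gcd (b $ 1) (b $ 2)) (gcd (b $ 3) (b $ 4))"
  shows "((\<Sum>i\<in>UNIV. b $ i) > 0 \<longrightarrow>
            (\<exists>U\<in>super_apollonian. descartes_config (U ** W) \<and>
                 is_perm_of (curv (U ** W)) (vec00cc (of_int g))))
       \<and> ((\<Sum>i\<in>UNIV. b $ i) < 0 \<longrightarrow>
            (\<exists>U\<in>super_apollonian. descartes_config (U ** W) \<and>
                 is_perm_of (curv (U ** W)) (vec00cc (- of_int g))))"
proof -
  have cw: "curv W = rv b" using assms(2) by (simp add: vec_eq_iff rv_def)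
  have gg: "g = gv b" unfolding g_def gv_def ..
  have sum: "(\<Sum>i\<in>UNIV. b $ i) = vs b" by (simp add: sum_4 vs_def)
  have "real_of_int (2 * ((b$1)^2 + (b$2)^2 + (b$3)^2 + (b$4)^2)) = real_of_int ((vs b)^2)"
    using desc_Q[OF assms(1)] assms(2) by (simp add: vs_def)
  then have Q: "Qz b" unfolding Qz_def by (simp only: of_int_eq_iff)
  have curvU: "curv (U ** W) = U *v rv b" for U by (simp add: curv_mult cw)
  show ?thesis
  proof (intro conjI impI)
    assume "(\<Sum>i\<in>UNIV. b $ i) > 0"
    then have "vs b > 0" using sum by simp
    then obtain U p where U: "U \<in> super_apollonian" "p permutes UNIV"
      "\<forall>i. (U *v rv b)$i = vec00cc (real_of_int (gv b)) $ p i"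
      using descent[OF refl _ Q] by blast
    show "\<exists>U\<in>super_apollonian. descartes_config (U ** W) \<and> is_perm_of (curv (U ** W)) (vec00cc (of_int g))"
      using U SA_desc[OF U(1) assms(1)] unfolding is_perm_of_def curvU gg by blast
  next
    assume "(\<Sum>i\<in>UNIV. b $ i) < 0"
    then have pos: "vs (- b) > 0" using sum by (simp add: vs_def)
    have Q': "Qz (- b)" using Q by (simp add: Qz_def vs_def power2_eq_square algebra_simps)
    have g': "gv (- b) = gv b" by (simp add: gv_def)
    obtain U p where U: "U \<in> super_apollonian" "p permutes UNIV"
      "\<forall>i. (U *v rv (- b))$i = vec00cc (real_of_int (gv (- b))) $ p i"
      using descent[OF refl pos Q'] by blast
    have rvn: "rv (- b) = - rv b" by (simp add: rv_def vec_eq_iff)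
    have "\<forall>i. (U *v rv b)$i = vec00cc (- real_of_int (gv b)) $ p i"
    proof
      fix i
      have "- (U *v rv b)$i = vec00cc (real_of_int (gv b)) $ p i"
        using U(3) unfolding rvn mv_neg g' by simp
      then show "(U *v rv b)$i = vec00cc (- real_of_int (gv b)) $ p i"
        by (cases "p i = 1 \<or> p i = 2") (simp_all add: vec00cc_def)
    qed
    then show "\<exists>U\<in>super_apollonian. descartes_config (U ** W) \<and> is_perm_of (curv (U ** W)) (vec00cc (- of_int g))"
      using U(1,2) SA_desc[OF U(1) assms(1)] unfolding is_perm_of_def curvU gg by blast
  qed
qed


end
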